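(* Let $X$ be a compact metrizable space, $\Delta$ a weak*-closed set of Borel probability measures on $X$, and $\varepsilon>0$. Let $f,g\colon X\to\mathbb R$ be continuous with $\|f-g\|_{2,\Delta}^2<\varepsilon^3/8$ and $\mu(g^{-1}(0))<\varepsilon/2$ for all $\mu\in\Delta$. Then there is a continuous $g'\colon X\to\mathbb R$ such that $\|f-g'\|_\infty<\varepsilon$ and $\mu((g')^{-1}(0))<\varepsilon$ for all $\mu\in\Delta$.
   Context: $\|h\|_{2,\Delta}=\sup\{(\int|h|^2d\mu)^{1/2}:\mu\in\Delta\}$ for $h\in\mathrm{C}(X)$. *)

theory Defs
  imports "HOL-Probability.Probability"
begin

definition borel_prob_measures :: "'a::topological_space measure set" where
  "borel_prob_measures = {M. sets M = sets borel \<and> prob_space M}"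

definition weak_star_topology :: "'a::topological_space measure topology" where
  "weak_star_topology = topology_generated_by
     {{M \<in> borel_prob_measures. (\<integral>x. f x \<partial>M) \<in> U} | f U.
        continuous_on UNIV (f :: 'a \<Rightarrow> real) \<and> open U}"

definition norm2Delta :: "'a::topological_space measure set \<Rightarrow> ('a \<Rightarrow> real) \<Rightarrow> real" where
  "norm2Delta \<Delta> h = (SUP \<mu>\<in>\<Delta>. sqrt (\<integral>x. \<bar>h x\<bar>^2 \<partial>\<mu>))"

definition sup_norm :: "('a \<Rightarrow> real) \<Rightarrow> real" where
  "sup_norm h = (SUP x. \<bar>h x\<bar>)"

end

theory Submission
  imports Defs
begin

lemma cheb_aux:
  fixes \<mu> :: "'a::metric_space measure" and h :: "'a \<Rightarrow> real"
  assumes "\<mu> \<in> borel_prob_measures" "continuous_on UNIV h" "\<forall>x. \<bar>h x\<bar> \<le> B" "c > 0"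
  shows "integrable \<mu> (\<lambda>x. \<bar>h x\<bar>^2)" "(\<integral>x. \<bar>h x\<bar>^2 \<partial>\<mu>) \<le> B^2"
    "c^2 * measure \<mu> {x. c < \<bar>h x\<bar>} \<le> (\<integral>x. \<bar>h x\<bar>^2 \<partial>\<mu>)"
proof -
  have ps: "prob_space \<mu>" and se: "sets \<mu> = sets borel"
    using assms(1) by (auto simp: borel_prob_measures_def)
  interpret prob_space \<mu> by (rule ps)
  have hb: "(\<lambda>x. \<bar>h x\<bar>^2) \<in> borel_measurable borel"
    by (intro borel_measurable_continuous_onI continuous_intros assms(2))
  have hm: "(\<lambda>x. \<bar>h x\<bar>^2) \<in> borel_measurable \<mu>"
    using hb by (metis measurable_cong_sets[OF se refl])
  have B2: "\<bar>h x\<bar>^2 \<le> B^2" for x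
    using assms(3) by (intro power_mono) auto
  show int: "integrable \<mu> (\<lambda>x. \<bar>h x\<bar>^2)"
    by (rule integrable_const_bound[where B="B^2"]) (use hm B2 in auto)
  have "(\<integral>x. \<bar>h x\<bar>^2 \<partial>\<mu>) \<le> (\<integral>x. B^2 \<partial>\<mu>)"
    by (rule integral_mono) (use int B2 in auto)
  then show "(\<integral>x. \<bar>h x\<bar>^2 \<partial>\<mu>) \<le> B^2" by (simp add: prob_space)
  have So: "open {x. c < \<bar>h x\<bar>}"
    by (intro open_Collect_less continuous_intros assms(2))
  then have S: "{x. c < \<bar>h x\<bar>} \<in> sets \<mu>" using se by auto
  have "(\<integral>x. c^2 * indicator {x. c < \<bar>h x\<bar>} x \<partial>\<mu>) \<le> (\<integral>x. \<bar>h x\<bar>^2 \<partial>\<mu>)"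
  proof (rule integral_mono[OF _ int])
    show "integrable \<mu> (\<lambda>x. c^2 * indicator {x. c < \<bar>h x\<bar>} x)"
      using S by (intro integrable_mult_right integrable_real_indicator) (auto simp: less_top[symmetric])
    fix x show "c^2 * indicator {x. c < \<bar>h x\<bar>} x \<le> \<bar>h x\<bar>^2"
      using assms(4) power_mono[of c "\<bar>h x\<bar>" 2] by (auto simp: indicator_def)
  qed
  then show "c^2 * measure \<mu> {x. c < \<bar>h x\<bar>} \<le> (\<integral>x. \<bar>h x\<bar>^2 \<partial>\<mu>)"
    using S by simp
qed

theorem lemma2p8:
  fixes \<Delta> :: "'a::metric_space measure set"
    and f g :: "'a \<Rightarrow> real" and \<epsilon> :: real
  assumes "compact (UNIV :: 'a set)"
    and "\<Delta> \<subseteq> borel_prob_measures"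
    and "closedin weak_star_topology \<Delta>"
    and "\<epsilon> > 0"
    and "continuous_on UNIV f" and "continuous_on UNIV g"
    and "(norm2Delta \<Delta> (\<lambda>x. f x - g x))^2 < \<epsilon>^3 / 8"
    and "\<forall>\<mu>\<in>\<Delta>. measure \<mu> (g -` {0}) < \<epsilon> / 2"
  shows "\<exists>g'. continuous_on UNIV g' \<and> sup_norm (\<lambda>x. f x - g' x) < \<epsilon> \<and>
           (\<forall>\<mu>\<in>\<Delta>. measure \<mu> (g' -` {0}) < \<epsilon>)"
  proof -
  define h where "h = (\<lambda>x. f x - g x)"
  have hc: "continuous_on UNIV h" unfolding h_def using assms(5,6) by (intro continuous_intros)
  have "compact (h ` UNIV)" by (rule compact_continuous_image[OF hc assms(1)])
  then obtain B where B: "\<forall>y\<in>h ` UNIV. norm y \<le> B"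
    using compact_imp_bounded bounded_pos by metis
  then have B': "\<forall>x. \<bar>h x\<bar> \<le> B" by auto
  define N where "N = norm2Delta \<Delta> h"
  have IN: "(\<integral>x. \<bar>h x\<bar>^2 \<partial>\<mu>) \<le> N^2" if mu: "\<mu> \<in> \<Delta>" for \<mu>
  proof -
    have mb: "\<mu> \<in> borel_prob_measures" using mu assms(2) by auto
    have "sqrt (\<integral>x. \<bar>h x\<bar>^2 \<partial>\<mu>) \<le> N"
      unfolding N_def norm2Delta_def
    proof (rule cSUP_upper[OF mu])
      show "bdd_above ((\<lambda>\<mu>. sqrt (\<integral>x. \<bar>h x\<bar>^2 \<partial>\<mu>)) ` \<Delta>)"
      proof (rule bdd_aboveI2[where M="sqrt (B^2)"])
        fix \<nu> assume "\<nu> \<in> \<Delta>"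
        then have "\<nu> \<in> borel_prob_measures" using assms(2) by auto
        then show "sqrt (\<integral>x. \<bar>h x\<bar>^2 \<partial>\<nu>) \<le> sqrt (B^2)"
          using cheb_aux(2)[OF _ hc B' assms(4)] real_sqrt_le_mono by blast
      qed
    qed
    moreover have "0 \<le> (\<integral>x. \<bar>h x\<bar>^2 \<partial>\<mu>)" by (rule Bochner_Integration.integral_nonneg) auto
    ultimately show ?thesis
      by (metis power_mono real_sqrt_ge_zero real_sqrt_pow2)
  qed
  define c where "c = \<epsilon> / 2"
  have c: "c > 0" using assms(4) c_def by simp
  define g' where "g' = (\<lambda>x. f x - max (-c) (min c (h x)))"
  have g'c: "continuous_on UNIV g'" unfolding g'_def using assms(5) hc by (intro continuous_intros)
  have "sup_norm (\<lambda>x. f x - g' x) \<le> c"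
    unfolding sup_norm_def g'_def by (rule cSUP_least) (use c in auto)
  then have sn: "sup_norm (\<lambda>x. f x - g' x) < \<epsilon>" using c c_def by simp
  have meas: "measure \<mu> (g' -` {0}) < \<epsilon>" if mu: "\<mu> \<in> \<Delta>" for \<mu>
  proof -
    have mb: "\<mu> \<in> borel_prob_measures" using mu assms(2) by auto
    have ps: "prob_space \<mu>" and se: "sets \<mu> = sets borel"
      using mb by (auto simp: borel_prob_measures_def)
    interpret prob_space \<mu> by (rule ps)
    define S where "S = {x. c < \<bar>h x\<bar>}"
    have S: "S \<in> sets \<mu>" proof -
      have "open S" unfolding S_def by (intro open_Collect_less continuous_intros hc)
      then show ?thesis using se by simp
    qed
    have Z: "g -` {0} \<in> sets \<mu>" using se assms(6)
      by (metis borel_closed closed_vimage closed_singleton)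
    have sub: "g' -` {0} \<subseteq> g -` {0} \<union> S"
      unfolding g'_def S_def h_def by auto
    have "c^2 * measure \<mu> S \<le> N^2"
      using cheb_aux(3)[OF mb hc B' c] IN[OF mu] unfolding S_def by linarith
    also have "N^2 < \<epsilon>^3/8" using assms(7) unfolding N_def h_def .
    finally have lt: "c^2 * measure \<mu> S < \<epsilon>^3/8" .
    have mS: "measure \<mu> S < \<epsilon>/2"
    proof (rule ccontr)
      assume "\<not> ?thesis"
      then have "c^2 * (\<epsilon>/2) \<le> c^2 * measure \<mu> S" by (intro mult_left_mono) auto
      moreover have "c^2 * (\<epsilon>/2) = \<epsilon>^3/8" unfolding c_def by (simp add: power2_eq_square power3_eq_cube)
      ultimately show False using lt by linarith
    qed
    have "measure \<mu> (g' -` {0}) \<le> measure \<mu> (g -` {0} \<union> S)"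
      using sub S Z by (intro finite_measure_mono) auto
    also have "\<dots> \<le> measure \<mu> (g -` {0}) + measure \<mu> S"
      using S Z by (intro measure_subadditive) auto
    finally show ?thesis using mS assms(8) mu by fastforce
  qed
  show ?thesis using g'c sn meas by blast
qed

end
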